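(* Let $m\ge 2$ be an integer and let $\mathcal{A}\subset\mathbb{R}$ be a finite alphabet. Let $(X^{(j)}_i)_{i\ge 1,\,1\le j\le m}$ be independent and identically distributed random variables with values in $\mathcal{A}$. Let $S:\mathcal{A}^m\to[0,\infty)$ be a function that is not identically zero, is invariant under permutations of its $m$ arguments, satisfies $\sup_{x\in\mathcal{A}^m}S(x)<\infty$, and for which there is a constant $D>0$ such that $|S(x)-S(y)|\le D$ whenever $x,y\in\mathcal{A}^m$ differ in at most one coordinate. For $q=(q_1,\dots,q_m)$ in the domain $Q:=\{q\in(0,\infty)^m:\ q_1+\cdots+q_m=m\}$ let $$\widetilde{\gamma}^*(q):=\lim_{n\to\infty}\frac1n\,\mathbb{E}\Big(L\big(X^{(1)}_1\cdots X^{(1)}_{\lceil nq_1\rceil};\ \cdots;\ X^{(m)}_1\cdots X^{(m)}_{\lceil nq_m\rceil}\big)\Big).$$ Then $\widetilde{\gamma}^*$ is concave on $Q$. In particular, $\widetilde{\gamma}^*$ attains its maximum over $Q$ at $q_1=\cdots=q_m=1$.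
   Context: Alignments and optimal score: for finite words $w^{(1)},\dots,w^{(m)}$ over $\mathcal{A}$ of lengths $\ell_1,\dots,\ell_m$, an alignment is a choice of an integer $k\ge 0$ and, for each $j$, indices $1\le \pi^{(j)}_1<\cdots<\pi^{(j)}_k\le \ell_j$; its score is $\sum_{i=1}^k S(w^{(1)}_{\pi^{(1)}_i},\dots,w^{(m)}_{\pi^{(m)}_i})$. The optimal score $L(w^{(1)};\dots;w^{(m)})$ is the maximum score over all alignments. The limit defining $\widetilde{\gamma}^*$ exists (by superadditivity). *)

theory Defs
  imports "HOL-Probability.Probability"
begin

definition alignments :: "nat \<Rightarrow> (nat \<Rightarrow> real list) \<Rightarrow> (nat \<times> (nat \<Rightarrow> nat \<Rightarrow> nat)) set" where
  "alignments m w = {(k, \<pi>). \<forall>j<m. strict_mono_on {..<k} (\<pi> j) \<and> (\<forall>i<k. \<pi> j i < length (w j))}"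

definition align_score :: "(real list \<Rightarrow> real) \<Rightarrow> nat \<Rightarrow> (nat \<Rightarrow> real list)
    \<Rightarrow> nat \<times> (nat \<Rightarrow> nat \<Rightarrow> nat) \<Rightarrow> real" where
  "align_score S m w a = (\<Sum>i<fst a. S (map (\<lambda>j. w j ! (snd a j i)) [0..<m]))"

definition opt_score :: "(real list \<Rightarrow> real) \<Rightarrow> nat \<Rightarrow> (nat \<Rightarrow> real list) \<Rightarrow> real" where
  "opt_score S m w = Max (align_score S m w ` alignments m w)"

definition Qdom :: "nat \<Rightarrow> (nat \<Rightarrow> real) set" where
  "Qdom m = {q. (\<forall>j<m. 0 < q j) \<and> (\<Sum>j<m. q j) = real m}"

text \<open>gamma tilde star (q) = lim (1/n) E L(X^(1)_1..X^(1)_{ceil(n q_1)}; ...).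
  Random variables are indexed X j i, j<m, i 0-based.\<close>
definition gamma_tilde :: "'a measure \<Rightarrow> (nat \<Rightarrow> nat \<Rightarrow> 'a \<Rightarrow> real) \<Rightarrow> (real list \<Rightarrow> real)
    \<Rightarrow> nat \<Rightarrow> (nat \<Rightarrow> real) \<Rightarrow> real" where
  "gamma_tilde M X S m q = lim (\<lambda>n. (integral\<^sup>L M (\<lambda>\<omega>.
      opt_score S m (\<lambda>j. map (\<lambda>i. X j i \<omega>) [0..<nat \<lceil>real n * q j\<rceil>]))) / real n)"

end

theory Submission
  imports Defs
begin


lemma superadd_mult:
  fixes b :: "nat \<Rightarrow> real"
  assumes sup: "\<And>n k. b (n + k) \<ge> b n + b k"
  shows "b (q * p + r) \<ge> real q * b p + b r"
proof (induction q)
  case 0 then show ?case by simp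
next
  case (Suc q)
  have "b (Suc q * p + r) = b (p + (q * p + r))" by (simp add: algebra_simps)
  also have "\<dots> \<ge> b p + b (q * p + r)" using sup by blast
  finally show ?case using Suc by (simp add: algebra_simps)
qed

lemma fekete:
  fixes b :: "nat \<Rightarrow> real"
  assumes sup: "\<And>n k. b (n + k) \<ge> b n + b k"
    and bnd: "\<And>n. b n \<le> C * real n"
  shows "(\<lambda>n. b n / real n) \<longlonglongrightarrow> (SUP n\<in>{1..}. b n / real n)"
proof -
  let ?s = "SUP n\<in>{1..}. b n / real n"
  have bdd: "bdd_above ((\<lambda>n. b n / real n) ` {1..})"
    using bnd by (intro bdd_aboveI[of _ C]) (auto simp: divide_simps)
  show ?thesis
  proof (rule order_tendstoI)
    fix a assume "a < ?s"
    then obtain p where p: "p \<ge> 1" "a < b p / real p"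
      using less_cSUP_iff[OF _ bdd, of a] by auto
    define c where "c = (\<Sum>r<p. \<bar>b r\<bar>)"
    define K where "K = \<bar>b p\<bar> + c"
    have K0: "K \<ge> 0" unfolding K_def c_def by (auto intro: sum_nonneg)
    define e where "e = b p / real p - a"
    have e0: "e > 0" using p e_def by simp
    have key: "b n / real n \<ge> b p / real p - K / real n" if n: "n \<ge> 1" for n
    proof -
      define q where "q = n div p"
      define r where "r = n mod p"
      have nqr: "n = q * p + r" unfolding q_def r_def by simp
      have rp: "r < p" unfolding r_def using p by simp
      have "b n \<ge> real q * b p + b r" using superadd_mult[OF sup] nqr by simp
      moreover have "b r \<ge> - c"
      proof -
        have "\<bar>b r\<bar> \<le> c" unfolding c_def
          by (rule member_le_sum[of r "{..<p}" "\<lambda>r. \<bar>b r\<bar>"]) (use rp in auto)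
        then show ?thesis by linarith
      qed
      moreover have "real q * b p \<ge> real n / real p * b p - \<bar>b p\<bar>"
      proof -
        have rq: "real n / real p = real q + real r / real p"
          using nqr p by (simp add: field_simps)
        have "0 \<le> real r / real p" "real r / real p \<le> 1" using rp by auto
        then have "real r / real p * b p \<le> \<bar>b p\<bar>"
          by (metis abs_ge_self abs_mult abs_of_nonneg dual_order.trans mult_left_le_one_le abs_ge_zero)
        then show ?thesis using rq by (simp add: algebra_simps)
      qed
      ultimately have "b n \<ge> real n * (b p / real p) - K" unfolding K_def by simp
      then have "(real n * (b p / real p) - K) / real n \<le> b n / real n"
        using n by (intro divide_right_mono) auto
      moreover have "(real n * (b p / real p) - K) / real n = b p / real p - K / real n"
        using n by (simp add: field_simps)
      ultimately show ?thesis by simp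
    qed
    have "eventually (\<lambda>n. K / real n < e) sequentially"
    proof -
      have "(\<lambda>n. K / real n) \<longlonglongrightarrow> 0" by (rule lim_const_over_n)
      then show ?thesis using e0 by (simp add: order_tendsto_iff)
    qed
    moreover have "eventually (\<lambda>n. n \<ge> 1) sequentially" by (rule eventually_ge_at_top)
    ultimately show "eventually (\<lambda>n. a < b n / real n) sequentially"
    proof eventually_elim
      case (elim n) then show ?case using key[of n] e_def by linarith
    qed
  next
    fix a assume sa: "?s < a"
    have "b n / real n < a" if "n \<ge> 1" for n
      using cSUP_upper[OF _ bdd, of n] that sa by force
    then show "eventually (\<lambda>n. b n / real n < a) sequentially"
      by (metis (mono_tags, lifting) eventually_sequentiallyI)
  qed
qed

lemma ceil_add_le:
  fixes x y :: real
  assumes "0 \<le> x" "0 \<le> y"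
  shows "nat \<lceil>x\<rceil> + nat \<lceil>y\<rceil> \<le> nat \<lceil>x + y\<rceil> + 1"
proof -
  have "\<lceil>x\<rceil> + \<lceil>y\<rceil> \<le> \<lceil>x + y\<rceil> + 1"
  proof -
    have "real_of_int \<lceil>x\<rceil> + real_of_int \<lceil>y\<rceil> < real_of_int \<lceil>x + y\<rceil> + 2"
      using ceiling_correct[of x] ceiling_correct[of y] le_of_int_ceiling[of "x+y"] by linarith
    then have "real_of_int (\<lceil>x\<rceil> + \<lceil>y\<rceil>) < real_of_int (\<lceil>x + y\<rceil> + 2)" by simp
    then have "\<lceil>x\<rceil> + \<lceil>y\<rceil> < \<lceil>x + y\<rceil> + 2" by (simp only: of_int_less_iff)
    then show ?thesis by linarith
  qed
  have a0: "0 \<le> \<lceil>x\<rceil>" "0 \<le> \<lceil>y\<rceil>" "0 \<le> \<lceil>x + y\<rceil>" using assms by auto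
  then have "nat \<lceil>x\<rceil> + nat \<lceil>y\<rceil> = nat (\<lceil>x\<rceil> + \<lceil>y\<rceil>)" by (simp add: nat_add_distrib)
  also have "\<dots> \<le> nat (\<lceil>x + y\<rceil> + 1)" using \<open>\<lceil>x\<rceil> + \<lceil>y\<rceil> \<le> \<lceil>x + y\<rceil> + 1\<close> by (intro nat_mono)
  also have "\<dots> = nat \<lceil>x + y\<rceil> + 1" using a0 by (simp add: nat_add_distrib)
  finally show ?thesis .
qed

lemma rot_bij:
  assumes "j < (m::nat)"
  shows "bij_betw (\<lambda>k. (j + k) mod m) {..<m} {..<m}"
proof -
  have inj: "inj_on (\<lambda>k. (j + k) mod m) {..<m}"
  proof
    fix x y assume xy: "x \<in> {..<m}" "y \<in> {..<m}" and eq: "(j + x) mod m = (j + y) mod m"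
    have *: "u = v" if "u \<le> v" "v < m" "(j + u) mod m = (j + v) mod m" for u v
    proof -
      have "m dvd (j + v) - (j + u)" using mod_eq_dvd_iff_nat[of "j + u" "j + v" m] that by simp
      then have "m dvd v - u" by simp
      then show "u = v" using that dvd_imp_le[of m "v - u"] by (cases "v - u = 0") auto
    qed
    show "x = y"
    proof (cases "x \<le> y")
      case True then show ?thesis using * xy eq by auto
    next
      case False then show ?thesis using *[of y x] xy eq by auto
    qed
  qed
  have "(\<lambda>k. (j + k) mod m) ` {..<m} \<subseteq> {..<m}" using assms by auto
  moreover have "card ((\<lambda>k. (j + k) mod m) ` {..<m}) = card {..<m::nat}"
    using card_image[OF inj] by simp
  ultimately have "(\<lambda>k. (j + k) mod m) ` {..<m} = {..<m}"
    by (intro card_subset_eq) auto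
  then show ?thesis using inj by (simp add: bij_betw_def)
qed

lemma sum_rot:
  assumes "j < (m::nat)"
  shows "(\<Sum>k<m. f ((j + k) mod m)) = (\<Sum>k<m. f k)"
  using sum.reindex_bij_betw[OF rot_bij[OF assms], of f] by simp

locale gam =
  fixes m :: nat and F :: "(nat \<Rightarrow> nat) \<Rightarrow> real" and B :: real
  assumes m_pos: "0 < m" and B_nonneg: "0 \<le> B"
  and F_cong: "\<And>l l'. (\<And>j. j < m \<Longrightarrow> l j = l' j) \<Longrightarrow> F l = F l'"
  and F_super: "\<And>l l'. F l + F l' \<le> F (\<lambda>j. l j + l' j)"
  and F_lip: "\<And>l l' d. (\<And>j. j < m \<Longrightarrow> l' j \<le> l j + d) \<Longrightarrow> F l' \<le> F l + real d * B"
  and F_nonneg: "\<And>l. 0 \<le> F l"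
  and F_bound: "\<And>l. F l \<le> B * real (l 0)"
  and F_rot: "\<And>l. F (\<lambda>j. l ((j + 1) mod m)) = F l"
begin

definition a where "a q n = F (\<lambda>j. nat \<lceil>real n * q j\<rceil>)"
definition Gam where "Gam q = lim (\<lambda>n. a q n / real n)"
definition nn where "nn q \<longleftrightarrow> (\<forall>j<m. 0 \<le> (q j::real))"

lemma a_super:
  assumes "nn q"
  shows "a q n + a q k - B \<le> a q (n + k)"
proof -
  have "F (\<lambda>j. nat \<lceil>real n * q j\<rceil> + nat \<lceil>real k * q j\<rceil>) \<le> a q (n + k) + real 1 * B"
    unfolding a_def
  proof (rule F_lip)
    fix j assume "j < m"
    then have "0 \<le> q j" using assms by (simp add: nn_def)
    then have "nat \<lceil>real n * q j\<rceil> + nat \<lceil>real k * q j\<rceil> \<le> nat \<lceil>real n * q j + real k * q j\<rceil> + 1"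
      by (intro ceil_add_le) auto
    then show "nat \<lceil>real n * q j\<rceil> + nat \<lceil>real k * q j\<rceil> \<le> nat \<lceil>real (n + k) * q j\<rceil> + 1"
      by (simp add: distrib_right)
  qed
  then show ?thesis using F_super[of "\<lambda>j. nat \<lceil>real n * q j\<rceil>" "\<lambda>j. nat \<lceil>real k * q j\<rceil>"]
    unfolding a_def by simp
qed

lemma a_upper:
  assumes "nn q"
  shows "a q n \<le> B * (real n * q 0 + 1)"
proof -
  have q0: "0 \<le> q 0" using assms m_pos by (simp add: nn_def)
  have "a q n \<le> B * real (nat \<lceil>real n * q 0\<rceil>)"
    using F_bound[of "\<lambda>j. nat \<lceil>real n * q j\<rceil>"] unfolding a_def by simp
  also have "\<dots> \<le> B * (real n * q 0 + 1)"
  proof (rule mult_left_mono[OF _ B_nonneg])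
    have z0: "0 \<le> real n * q 0" using q0 by simp
    then have "0 \<le> \<lceil>real n * q 0\<rceil>" by simp
    then have "real (nat \<lceil>real n * q 0\<rceil>) = real_of_int \<lceil>real n * q 0\<rceil>" by simp
    then show "real (nat \<lceil>real n * q 0\<rceil>) \<le> real n * q 0 + 1"
      using ceiling_correct[of "real n * q 0"] by linarith
  qed
  finally show ?thesis .
qed

lemma a_nonneg: "0 \<le> a q n" unfolding a_def by (rule F_nonneg)

lemma a_conv:
  assumes "nn q"
  shows "(\<lambda>n. a q n / real n) \<longlonglongrightarrow> Gam q"
proof -
  define b where "b n = a q n - B" for n
  have q0: "0 \<le> q 0" using assms m_pos by (simp add: nn_def)
  have "(\<lambda>n. b n / real n) \<longlonglongrightarrow> (SUP n\<in>{1..}. b n / real n)"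
  proof (rule fekete)
    show "b n + b k \<le> b (n + k)" for n k using a_super[OF assms, of n k] unfolding b_def by simp
    show "b n \<le> (B * q 0) * real n" for n using a_upper[OF assms, of n] unfolding b_def
      by (simp add: algebra_simps)
  qed
  moreover have "(\<lambda>n. B / real n) \<longlonglongrightarrow> 0" by (rule lim_const_over_n)
  ultimately have "(\<lambda>n. b n / real n + B / real n) \<longlonglongrightarrow> (SUP n\<in>{1..}. b n / real n) + 0"
    by (intro tendsto_add)
  moreover have "b n / real n + B / real n = a q n / real n" for n
    unfolding b_def by (simp add: diff_divide_distrib)
  ultimately have L: "(\<lambda>n. a q n / real n) \<longlonglongrightarrow> (SUP n\<in>{1..}. b n / real n)" by simp
  then show ?thesis unfolding Gam_def using limI by (metis)
qed

lemma Gam_cong: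
  assumes "\<And>j. j < m \<Longrightarrow> q j = q' j"
  shows "Gam q = Gam q'"
proof -
  have "a q n = a q' n" for n unfolding a_def by (rule F_cong) (simp add: assms)
  then show ?thesis unfolding Gam_def by simp
qed

lemma Gam_nonneg:
  assumes "nn q"
  shows "0 \<le> Gam q"
  by (rule LIMSEQ_le_const[OF a_conv[OF assms]]) (use a_nonneg in \<open>auto intro!: divide_nonneg_nonneg\<close>)


lemma nn_smult: "nn q \<Longrightarrow> 0 \<le> c \<Longrightarrow> nn (\<lambda>j. c * q j)"
  unfolding nn_def by auto

lemma nn_add: "nn q \<Longrightarrow> nn r \<Longrightarrow> nn (\<lambda>j. q j + r j)"
  unfolding nn_def by auto

lemma A_conv:
  assumes nq: "nn q"
  shows "((\<lambda>x. F (\<lambda>j. nat \<lceil>x * q j\<rceil>) / x) \<longlongrightarrow> Gam q) at_top"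
proof -
  define D where "D = (\<Sum>j<m. nat \<lceil>q j\<rceil>)"
  have q0: "0 \<le> q 0" using nq m_pos by (simp add: nn_def)
  define K where "K = real D * B + B * (q 0 + 1)"
  define A where "A x = F (\<lambda>j. nat \<lceil>x * q j\<rceil>)" for x
  have conv1: "((\<lambda>x. a q (nat \<lfloor>x\<rfloor>) / real (nat \<lfloor>x\<rfloor>)) \<longlongrightarrow> Gam q) at_top"
    by (rule filterlim_compose[OF a_conv[OF nq]])
       (rule filterlim_compose[OF filterlim_nat_sequentially filterlim_floor_sequentially])
  have bound: "norm (A x / x - a q (nat \<lfloor>x\<rfloor>) / real (nat \<lfloor>x\<rfloor>)) \<le> K / x" if x: "x \<ge> 1" for x
  proof -
    define k where "k = nat \<lfloor>x\<rfloor>"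
    have fl0: "0 \<le> \<lfloor>x\<rfloor>" using x by simp
    have kx: "real k = real_of_int \<lfloor>x\<rfloor>" unfolding k_def using fl0 by simp
    have k1: "real k \<le> x" "x < real k + 1" using kx floor_correct[of x] by linarith+
    have k1': "1 \<le> real k" using x kx by (simp add: le_floor_iff)
    have lip1: "A x \<le> a q k + real D * B" unfolding a_def A_def
    proof (rule F_lip)
      fix j assume j: "j < m"
      then have qj: "0 \<le> q j" using nq by (simp add: nn_def)
      have "x * q j \<le> real k * q j + q j" using k1 qj
        by (metis add.commute distrib_left mult.commute mult_right_mono less_imp_le mult.right_neutral)
      then have "\<lceil>x * q j\<rceil> \<le> \<lceil>real k * q j + q j\<rceil>" by (rule ceiling_mono)
      also have "\<dots> \<le> \<lceil>real k * q j\<rceil> + \<lceil>q j\<rceil>" by (rule ceiling_add_le)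
      finally have c1: "\<lceil>x * q j\<rceil> \<le> \<lceil>real k * q j\<rceil> + \<lceil>q j\<rceil>" .
      have "nat \<lceil>q j\<rceil> \<le> D" unfolding D_def
        by (rule member_le_sum[of j "{..<m}" "\<lambda>j. nat \<lceil>q j\<rceil>"]) (use j in auto)
      moreover have "0 \<le> real k * q j" using qj by simp
      then have "0 \<le> \<lceil>real k * q j\<rceil>" by simp
      moreover have "0 \<le> \<lceil>q j\<rceil>" using qj by simp
      ultimately show "nat \<lceil>x * q j\<rceil> \<le> nat \<lceil>real k * q j\<rceil> + D" using c1 by linarith
    qed
    have lip2: "a q k \<le> A x + real 0 * B" unfolding a_def A_def
    proof (rule F_lip)
      fix j assume j: "j < m"
      then have qj: "0 \<le> q j" using nq by (simp add: nn_def)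
      have "real k * q j \<le> x * q j" using k1 qj by (intro mult_right_mono) auto
      then have "\<lceil>real k * q j\<rceil> \<le> \<lceil>x * q j\<rceil>" by (rule ceiling_mono)
      then have "nat \<lceil>real k * q j\<rceil> \<le> nat \<lceil>x * q j\<rceil>" by (rule nat_mono)
      then show "nat \<lceil>real k * q j\<rceil> \<le> nat \<lceil>x * q j\<rceil> + 0" by simp
    qed
    have an: "0 \<le> a q k" "a q k \<le> B * (real k * q 0 + 1)" using a_nonneg a_upper[OF nq] by auto
    define u where "u = A x - a q k"
    define v where "v = a q k * (x - real k) / (x * real k)"
    have u: "0 \<le> u" "u \<le> real D * B" using lip1 lip2 unfolding u_def by auto
    have xpos: "0 < x" "0 < real k" using x k1' by auto
    have eq: "A x / x - a q k / real k = u / x - v"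
      unfolding u_def v_def using xpos by (simp add: field_simps)
    have v0: "0 \<le> v" unfolding v_def using an k1 xpos by (intro divide_nonneg_nonneg mult_nonneg_nonneg) auto
    have "a q k * (x - real k) \<le> a q k" using an k1 by (intro mult_left_le) auto
    also have "\<dots> \<le> B * (real k * q 0 + 1)" by (rule an(2))
    also have "\<dots> \<le> B * (q 0 + 1) * real k"
    proof -
      have "B * 1 \<le> B * real k" using k1' B_nonneg by (intro mult_left_mono) auto
      then show ?thesis by (simp add: algebra_simps)
    qed
    finally have "v \<le> B * (q 0 + 1) * real k / (x * real k)" unfolding v_def
      using xpos by (intro divide_right_mono) auto
    also have "\<dots> = B * (q 0 + 1) / x" using xpos by simp
    finally have v1: "v \<le> B * (q 0 + 1) / x" .
    have "u / x \<le> real D * B / x" using u xpos by (intro divide_right_mono) auto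
    then have "norm (u / x - v) \<le> K / x" unfolding K_def using u v0 v1 xpos
      by (simp add: add_divide_distrib abs_le_iff) (smt (verit) divide_nonneg_nonneg)
    then show ?thesis using eq unfolding k_def by simp
  qed
  have g0: "((\<lambda>x. K / x) \<longlongrightarrow> 0) at_top"
    by (rule tendsto_divide_0[OF tendsto_const]) (rule filterlim_at_top_imp_at_infinity[OF filterlim_ident])
  have "((\<lambda>x. A x / x - a q (nat \<lfloor>x\<rfloor>) / real (nat \<lfloor>x\<rfloor>)) \<longlongrightarrow> 0) at_top"
    by (rule Lim_null_comparison[OF _ g0]) (use bound in \<open>auto intro: eventually_at_top_linorderI[of 1]\<close>)
  from tendsto_add[OF this conv1] show ?thesis unfolding A_def by simp
qed

lemma Gam_hom:
  assumes nq: "nn q" and c: "0 < c"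
  shows "Gam (\<lambda>j. c * q j) = c * Gam q"
proof -
  have l1: "(\<lambda>n. a (\<lambda>j. c * q j) n / real n) \<longlonglongrightarrow> Gam (\<lambda>j. c * q j)"
    using a_conv nn_smult nq c by auto
  have fl: "filterlim (\<lambda>n. real n * c) at_top sequentially"
    by (rule filterlim_at_top_mult_tendsto_pos[OF tendsto_const c filterlim_real_sequentially])
  have l2: "(\<lambda>n. c * (F (\<lambda>j. nat \<lceil>(real n * c) * q j\<rceil>) / (real n * c))) \<longlonglongrightarrow> c * Gam q"
    by (rule tendsto_mult_left) (rule filterlim_compose[OF A_conv[OF nq] fl])
  have ev: "eventually (\<lambda>n. c * (F (\<lambda>j. nat \<lceil>(real n * c) * q j\<rceil>) / (real n * c)) =
      a (\<lambda>j. c * q j) n / real n) sequentially"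
  proof (rule eventually_sequentiallyI[of 1])
    fix n :: nat assume "1 \<le> n"
    then show "c * (F (\<lambda>j. nat \<lceil>(real n * c) * q j\<rceil>) / (real n * c)) = a (\<lambda>j. c * q j) n / real n"
      unfolding a_def using c by (simp add: mult.assoc)
  qed
  have "(\<lambda>n. a (\<lambda>j. c * q j) n / real n) \<longlonglongrightarrow> c * Gam q"
    using l2 tendsto_cong[OF ev] by simp
  then show ?thesis using l1 LIMSEQ_unique by blast
qed

lemma Gam_super:
  assumes nq: "nn q" and nr: "nn r"
  shows "Gam q + Gam r \<le> Gam (\<lambda>j. q j + r j)"
proof -
  have le: "a q n + a r n - B \<le> a (\<lambda>j. q j + r j) n" for n
  proof -
    have "F (\<lambda>j. nat \<lceil>real n * q j\<rceil> + nat \<lceil>real n * r j\<rceil>) \<le> a (\<lambda>j. q j + r j) n + real 1 * B"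
      unfolding a_def
    proof (rule F_lip)
      fix j assume "j < m"
      then have "0 \<le> q j" "0 \<le> r j" using nq nr by (auto simp: nn_def)
      then have "nat \<lceil>real n * q j\<rceil> + nat \<lceil>real n * r j\<rceil> \<le> nat \<lceil>real n * q j + real n * r j\<rceil> + 1"
        by (intro ceil_add_le) auto
      then show "nat \<lceil>real n * q j\<rceil> + nat \<lceil>real n * r j\<rceil> \<le> nat \<lceil>real n * (q j + r j)\<rceil> + 1"
        by (simp add: distrib_left)
    qed
    then show ?thesis using F_super[of "\<lambda>j. nat \<lceil>real n * q j\<rceil>" "\<lambda>j. nat \<lceil>real n * r j\<rceil>"]
      unfolding a_def by simp
  qed
  have l1: "(\<lambda>n. a q n / real n + a r n / real n - B / real n) \<longlonglongrightarrow> Gam q + Gam r - 0"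
    by (intro tendsto_diff tendsto_add a_conv nq nr lim_const_over_n)
  have l2: "(\<lambda>n. a (\<lambda>j. q j + r j) n / real n) \<longlonglongrightarrow> Gam (\<lambda>j. q j + r j)"
    by (intro a_conv nn_add nq nr)
  show ?thesis
  proof (rule LIMSEQ_le[OF l1[simplified] l2], intro exI allI impI)
    fix n :: nat assume "1 \<le> n"
    then show "a q n / real n + a r n / real n - B / real n \<le> a (\<lambda>j. q j + r j) n / real n"
      using le[of n] by (simp add: add_divide_distrib[symmetric] diff_divide_distrib[symmetric] divide_right_mono)
  qed
qed

lemma Gam_rot: "Gam (\<lambda>j. q ((j + 1) mod m)) = Gam q"
proof -
  have "a (\<lambda>j. q ((j + 1) mod m)) n = a q n" for n
    unfolding a_def using F_rot[of "\<lambda>j. nat \<lceil>real n * q j\<rceil>"] by simp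
  then show ?thesis unfolding Gam_def by simp
qed

lemma Gam_rotk: "Gam (\<lambda>j. q ((j + k) mod m)) = Gam q"
proof (induction k)
  case 0
  have "Gam (\<lambda>j. q ((j + 0) mod m)) = Gam q" by (rule Gam_cong) simp
  then show ?case .
next
  case (Suc k)
  have "Gam (\<lambda>j. q ((j + Suc k) mod m)) = Gam (\<lambda>j. (\<lambda>i. q ((i + k) mod m)) ((j + 1) mod m))"
    by (rule Gam_cong) (simp add: mod_add_left_eq)
  also have "\<dots> = Gam (\<lambda>i. q ((i + k) mod m))" by (rule Gam_rot)
  finally show ?case using Suc by simp
qed

lemma concave:
  assumes nq: "nn q" and nr: "nn r" and t: "0 \<le> t" "t \<le> 1"
  shows "t * Gam q + (1 - t) * Gam r \<le> Gam (\<lambda>j. t * q j + (1 - t) * r j)"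
proof (cases "t = 0 \<or> t = 1")
  case True then show ?thesis by auto
next
  case False
  then have t': "0 < t" "0 < 1 - t" using t by auto
  have "t * Gam q + (1 - t) * Gam r = Gam (\<lambda>j. t * q j) + Gam (\<lambda>j. (1 - t) * r j)"
    using Gam_hom[OF nq t'(1)] Gam_hom[OF nr t'(2)] by simp
  also have "\<dots> \<le> Gam (\<lambda>j. t * q j + (1 - t) * r j)"
    by (rule Gam_super) (use nn_smult nq nr t' in auto)
  finally show ?thesis .
qed

lemma maxim:
  assumes nq: "nn q" and sq: "(\<Sum>j<m. q j) = real m"
  shows "Gam q \<le> Gam (\<lambda>_. 1)"
proof -
  define V where "V K = (\<lambda>j. \<Sum>k<K. q ((j + k) mod m))" for K
  have nV: "nn (V K)" for K unfolding V_def nn_def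
    using nq m_pos by (auto simp: nn_def intro!: sum_nonneg)
  have nrot: "nn (\<lambda>j. q ((j + k) mod m))" for k using nq m_pos by (auto simp: nn_def)
  have ind: "real K * Gam q \<le> Gam (V K)" for K
  proof (induction K)
    case 0 then show ?case using Gam_nonneg[OF nV] by simp
  next
    case (Suc K)
    have "real (Suc K) * Gam q = real K * Gam q + Gam (\<lambda>j. q ((j + K) mod m))"
      using Gam_rotk[of q K] by (simp add: algebra_simps)
    also have "\<dots> \<le> Gam (V K) + Gam (\<lambda>j. q ((j + K) mod m))" using Suc by simp
    also have "\<dots> \<le> Gam (\<lambda>j. V K j + q ((j + K) mod m))" by (rule Gam_super[OF nV nrot])
    also have "(\<lambda>j. V K j + q ((j + K) mod m)) = V (Suc K)" unfolding V_def by auto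
    finally show ?case .
  qed
  have "Gam (V m) = Gam (\<lambda>j. real m * 1)"
    by (rule Gam_cong) (simp add: V_def sum_rot sq)
  also have "\<dots> = real m * Gam (\<lambda>_. 1)" using Gam_hom[of "\<lambda>_. 1" "real m"] m_pos by (simp add: nn_def)
  finally have "real m * Gam q \<le> real m * Gam (\<lambda>_. 1)" using ind[of m] by simp
  then show ?thesis using m_pos by simp
qed

end




lemma sum_split_add:
  fixes a b :: nat and f :: "nat \<Rightarrow> real"
  shows "(\<Sum>i<a+b. f i) = (\<Sum>i<a. f i) + (\<Sum>i<b. (f (a + i) :: real))"
  by (induction b) (simp_all add: add.assoc)

lemma strict_card:
  fixes f :: "nat \<Rightarrow> nat"
  assumes "strict_mono_on {..<k} f" "\<And>i. i < k \<Longrightarrow> f i < n"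
  shows "k \<le> n"
proof -
  have "card {..<k} \<le> card {..<n}"
    by (rule card_inj_on_le[OF strict_mono_on_imp_inj_on[OF assms(1)]]) (use assms(2) in auto)
  then show ?thesis by simp
qed

lemma align_k_le:
  assumes "(k, \<pi>) \<in> alignments m w" "0 < m"
  shows "k \<le> length (w 0)"
  using assms unfolding alignments_def by (auto intro: strict_card)

lemma align_zero: "(0, \<pi>) \<in> alignments m w"
  unfolding alignments_def by (auto simp: strict_mono_on_def)

lemma finite_scores:
  assumes m: "0 < m"
  shows "finite (align_score S m w ` alignments m w)"
proof -
  define N where "N = (\<Sum>j<m. length (w j))"
  have lenN: "length (w j) \<le> N" if "j < m" for j
    unfolding N_def by (rule member_le_sum[of j "{..<m}" "\<lambda>j. length (w j)"]) (use that in auto)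
  define nrm where "nrm a = (fst a, \<lambda>j\<in>{..<m}. \<lambda>i\<in>{..<N}. if i < fst a then snd a j i else 0)"
    for a :: "nat \<times> (nat \<Rightarrow> nat \<Rightarrow> nat)"
  define T where "T = {..N} \<times> PiE {..<m} (\<lambda>_. PiE {..<N} (\<lambda>_. {..N}))"
  have fT: "finite T" unfolding T_def by (intro finite_cartesian_product finite_PiE) auto
  have "align_score S m w ` alignments m w \<subseteq> align_score S m w ` T"
  proof
    fix y assume "y \<in> align_score S m w ` alignments m w"
    then obtain k \<pi> where a: "(k, \<pi>) \<in> alignments m w" and y: "y = align_score S m w (k, \<pi>)" by auto
    have kN: "k \<le> N" using align_k_le[OF a m] lenN[OF m] by simp
    have vals: "\<pi> j i < length (w j)" if "j < m" "i < k" for j i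
      using a that unfolding alignments_def by auto
    have "nrm (k, \<pi>) \<in> T" unfolding nrm_def T_def
      using kN vals lenN by (auto simp: PiE_iff less_imp_le_nat intro: order.trans[OF less_imp_le_nat])
    moreover have "align_score S m w (nrm (k, \<pi>)) = y"
      unfolding y align_score_def nrm_def using kN
      by (auto intro!: sum.cong arg_cong[where f=S] map_cong)
    ultimately show "y \<in> align_score S m w ` T" by (metis image_eqI)
  qed
  then show ?thesis using fT finite_subset by blast
qed

context
  fixes S :: "real list \<Rightarrow> real" and m :: nat
  assumes m_pos: "0 < m"
begin

lemma opt_ge: "a \<in> alignments m w \<Longrightarrow> align_score S m w a \<le> opt_score S m w"
  unfolding opt_score_def by (rule Max_ge[OF finite_scores[OF m_pos]]) auto

lemma opt_ex: "\<exists>a\<in>alignments m w. opt_score S m w = align_score S m w a"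
proof -
  have "opt_score S m w \<in> align_score S m w ` alignments m w"
    unfolding opt_score_def using align_zero by (intro Max_in[OF finite_scores[OF m_pos]]) auto
  then show ?thesis by auto
qed

lemma opt_obtain:
  obtains k \<pi> where "(k, \<pi>) \<in> alignments m w" "opt_score S m w = align_score S m w (k, \<pi>)"
  using opt_ex[of w] by (metis prod.collapse)

lemma opt_nonneg: "0 \<le> opt_score S m w"
  using opt_ge[OF align_zero] by (simp add: align_score_def)

end


lemma opt_cong:
  assumes "\<And>j. j < m \<Longrightarrow> w j = w' j"
  shows "opt_score S m w = opt_score S m w'"
proof -
  have al: "alignments m w = alignments m w'" unfolding alignments_def using assms by auto
  have sc: "align_score S m w a = align_score S m w' a" for a
    unfolding align_score_def using assms by (auto intro!: sum.cong arg_cong[where f=S] map_cong)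
  show ?thesis unfolding opt_score_def al sc by simp
qed

context
  fixes S :: "real list \<Rightarrow> real" and m :: nat and A :: "real set" and B :: real
  assumes m_pos: "0 < m" and B0: "0 \<le> B"
    and SB: "\<And>x. length x = m \<Longrightarrow> set x \<subseteq> A \<Longrightarrow> S x \<le> B"
begin

lemma col_A:
  assumes "(k, \<pi>) \<in> alignments m w" "\<And>j. j < m \<Longrightarrow> set (w j) \<subseteq> A" "i < k"
  shows "S (map (\<lambda>j. w j ! \<pi> j i) [0..<m]) \<le> B"
proof (rule SB)
  show "set (map (\<lambda>j. w j ! \<pi> j i) [0..<m]) \<subseteq> A"
  proof
    fix x assume "x \<in> set (map (\<lambda>j. w j ! \<pi> j i) [0..<m])"
    then obtain j where j: "j < m" "x = w j ! \<pi> j i" by auto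
    have "\<pi> j i < length (w j)" using assms(1,3) j unfolding alignments_def by auto
    then show "x \<in> A" using assms(2)[OF j(1)] j(2) nth_mem by blast
  qed
qed simp

lemma opt_upper:
  assumes wA: "\<And>j. j < m \<Longrightarrow> set (w j) \<subseteq> A"
  shows "opt_score S m w \<le> B * real (length (w 0))"
proof -
  obtain k \<pi> where a: "(k, \<pi>) \<in> alignments m w" and o: "opt_score S m w = align_score S m w (k, \<pi>)"
    by (rule opt_obtain[OF m_pos])
  have "align_score S m w (k, \<pi>) \<le> (\<Sum>i<k. B)" unfolding align_score_def fst_conv snd_conv
    by (rule sum_mono) (use col_A[OF a wA] in auto)
  also have "\<dots> = B * real k" by simp
  also have "\<dots> \<le> B * real (length (w 0))" using align_k_le[OF a m_pos] B0 by (intro mult_left_mono) auto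
  finally show ?thesis using o by simp
qed

lemma opt_drop:
  assumes wA: "\<And>j. j < m \<Longrightarrow> set (w' j) \<subseteq> A"
    and ext: "\<And>j. j < m \<Longrightarrow> w' j = w j @ e j" and el: "\<And>j. j < m \<Longrightarrow> length (e j) \<le> d"
  shows "opt_score S m w' \<le> opt_score S m w + real d * B"
proof -
  obtain k \<pi> where a: "(k, \<pi>) \<in> alignments m w'" and o: "opt_score S m w' = align_score S m w' (k, \<pi>)"
    by (rule opt_obtain[OF m_pos])
  have sm: "strict_mono_on {..<k} (\<pi> j)" and vl: "\<And>i. i < k \<Longrightarrow> \<pi> j i < length (w' j)" if "j < m" for j
    using a that unfolding alignments_def by auto
  define P where "P i \<longleftrightarrow> i = k \<or> (i < k \<and> (\<exists>j<m. length (w j) \<le> \<pi> j i))" for i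
  define k0 where "k0 = (LEAST i. P i)"
  have Pk0: "P k0" unfolding k0_def by (rule LeastI[of P k]) (simp add: P_def)
  have k0k: "k0 \<le> k" unfolding k0_def by (rule Least_le) (simp add: P_def)
  have good: "\<pi> j i < length (w j)" if "i < k0" "j < m" for i j
  proof -
    have "\<not> P i" using that(1) unfolding k0_def by (rule not_less_Least)
    then show ?thesis using that k0k unfolding P_def by auto
  qed
  have a0: "(k0, \<pi>) \<in> alignments m w" unfolding alignments_def
    using good sm k0k by (auto intro: monotone_on_subset)
  define c where "c i = S (map (\<lambda>j. w' j ! \<pi> j i) [0..<m])" for i
  have sc: "align_score S m w' (k, \<pi>) = (\<Sum>i<k0. c i) + (\<Sum>i\<in>{k0..<k}. c i)"
    unfolding align_score_def c_def
    using sum.atLeastLessThan_concat[of 0 k0 k "\<lambda>i. S (map (\<lambda>j. w' j ! \<pi> j i) [0..<m])"] k0k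
    by (simp add: atLeast0LessThan)
  have "(\<Sum>i<k0. c i) = align_score S m w (k0, \<pi>)"
    unfolding align_score_def c_def
    using good ext by (auto intro!: sum.cong arg_cong[where f=S] map_cong simp: nth_append)
  also have "\<dots> \<le> opt_score S m w" by (rule opt_ge[OF m_pos a0])
  finally have p1: "(\<Sum>i<k0. c i) \<le> opt_score S m w" .
  have kd: "k - k0 \<le> d"
  proof (cases "k0 = k")
    case True then show ?thesis by simp
  next
    case False
    then obtain j where j: "j < m" "length (w j) \<le> \<pi> j k0" and k0k': "k0 < k" using Pk0 k0k unfolding P_def by auto
    have "card {k0..<k} \<le> card {length (w j)..<length (w' j)}"
    proof (rule card_inj_on_le)
      show "inj_on (\<pi> j) {k0..<k}"
        by (rule strict_mono_on_imp_inj_on) (rule monotone_on_subset[OF sm[OF j(1)]], auto)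
      show "\<pi> j ` {k0..<k} \<subseteq> {length (w j)..<length (w' j)}"
      proof
        fix y assume "y \<in> \<pi> j ` {k0..<k}"
        then obtain i where i: "k0 \<le> i" "i < k" "y = \<pi> j i" by auto
        have "\<pi> j k0 \<le> \<pi> j i" using strict_mono_on_leD[OF sm[OF j(1)], of k0 i] i k0k' by auto
        then show "y \<in> {length (w j)..<length (w' j)}" using j vl[OF j(1) i(2)] i by auto
      qed
    qed auto
    then show ?thesis using ext[OF j(1)] el[OF j(1)] by simp
  qed
  have "(\<Sum>i\<in>{k0..<k}. c i) \<le> (\<Sum>i\<in>{k0..<k}. B)" unfolding c_def
    by (rule sum_mono) (use col_A[OF a wA] in auto)
  also have "\<dots> = real (k - k0) * B" by simp
  also have "\<dots> \<le> real d * B" using kd B0 by (intro mult_right_mono) auto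
  finally have p2: "(\<Sum>i\<in>{k0..<k}. c i) \<le> real d * B" .
  show ?thesis using o sc p1 p2 by simp
qed

end

lemma opt_mono_prefix:
  assumes m: "0 < m" and ext: "\<And>j. j < m \<Longrightarrow> w' j = w j @ e j"
  shows "opt_score S m w \<le> opt_score S m w'"
proof -
  obtain k \<pi> where a: "(k, \<pi>) \<in> alignments m w" and o: "opt_score S m w = align_score S m w (k, \<pi>)"
    by (rule opt_obtain[OF m])
  have a': "(k, \<pi>) \<in> alignments m w'" using a ext unfolding alignments_def
    by (auto intro: trans_less_add1)
  have "align_score S m w (k, \<pi>) = align_score S m w' (k, \<pi>)"
    using a ext unfolding align_score_def alignments_def
    by (auto intro!: sum.cong arg_cong[where f=S] map_cong simp: nth_append)
  then show ?thesis using o opt_ge[OF m a'] by simp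
qed

lemma opt_concat:
  assumes m: "0 < m"
  shows "opt_score S m u + opt_score S m v \<le> opt_score S m (\<lambda>j. u j @ v j)"
proof -
  obtain k1 \<pi>1 where a1: "(k1, \<pi>1) \<in> alignments m u" and o1: "opt_score S m u = align_score S m u (k1, \<pi>1)"
    by (rule opt_obtain[OF m])
  obtain k2 \<pi>2 where a2: "(k2, \<pi>2) \<in> alignments m v" and o2: "opt_score S m v = align_score S m v (k2, \<pi>2)"
    by (rule opt_obtain[OF m])
  define \<pi> where "\<pi> j i = (if i < k1 then \<pi>1 j i else length (u j) + \<pi>2 j (i - k1))" for j i
  have sm1: "strict_mono_on {..<k1} (\<pi>1 j)" and vl1: "\<And>i. i < k1 \<Longrightarrow> \<pi>1 j i < length (u j)" if "j < m" for j
    using a1 that unfolding alignments_def by auto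
  have sm2: "strict_mono_on {..<k2} (\<pi>2 j)" and vl2: "\<And>i. i < k2 \<Longrightarrow> \<pi>2 j i < length (v j)" if "j < m" for j
    using a2 that unfolding alignments_def by auto
  have a: "(k1 + k2, \<pi>) \<in> alignments m (\<lambda>j. u j @ v j)"
    unfolding alignments_def
  proof (clarsimp, intro conjI allI impI)
    fix j assume j: "j < m"
    show "strict_mono_on {..<k1 + k2} (\<pi> j)"
    proof (rule strict_mono_onI)
      fix r s assume rs: "r \<in> {..<k1 + k2}" "s \<in> {..<k1 + k2}" "r < s"
      show "\<pi> j r < \<pi> j s"
      proof (cases "s < k1")
        case True then show ?thesis using rs strict_mono_onD[OF sm1[OF j], of r s] unfolding \<pi>_def by auto
      next
        case False
        show ?thesis
        proof (cases "r < k1")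
          case True then show ?thesis using False vl1[OF j True] unfolding \<pi>_def by auto
        next
          case False2: False
          then show ?thesis using False rs strict_mono_onD[OF sm2[OF j], of "r - k1" "s - k1"]
            unfolding \<pi>_def by auto
        qed
      qed
    qed
    fix i assume i: "i < k1 + k2"
    show "\<pi> j i < length (u j) + length (v j)"
      using vl1[OF j, of i] vl2[OF j, of "i - k1"] i unfolding \<pi>_def by auto
  qed
  have "align_score S m (\<lambda>j. u j @ v j) (k1 + k2, \<pi>) =
      (\<Sum>i<k1. S (map (\<lambda>j. (u j @ v j) ! \<pi> j i) [0..<m])) +
      (\<Sum>i<k2. S (map (\<lambda>j. (u j @ v j) ! \<pi> j (k1 + i)) [0..<m]))"
    unfolding align_score_def by (simp add: sum_split_add)
  also have "(\<Sum>i<k1. S (map (\<lambda>j. (u j @ v j) ! \<pi> j i) [0..<m])) = align_score S m u (k1, \<pi>1)"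
    unfolding align_score_def \<pi>_def using vl1
    by (auto intro!: sum.cong arg_cong[where f=S] map_cong simp: nth_append)
  also have "(\<Sum>i<k2. S (map (\<lambda>j. (u j @ v j) ! \<pi> j (k1 + i)) [0..<m])) = align_score S m v (k2, \<pi>2)"
    unfolding align_score_def \<pi>_def
    by (auto intro!: sum.cong arg_cong[where f=S] map_cong simp: nth_append)
  finally show ?thesis using o1 o2 opt_ge[OF m a, where S=S] by simp
qed


lemma col_set:
  assumes "(k, \<pi>) \<in> alignments m w" "\<And>j. j < m \<Longrightarrow> set (w j) \<subseteq> A" "i < k"
  shows "set (map (\<lambda>j. w j ! \<pi> j i) [0..<m]) \<subseteq> A"
proof
  fix x assume "x \<in> set (map (\<lambda>j. w j ! \<pi> j i) [0..<m])"
  then obtain j where j: "j < m" "x = w j ! \<pi> j i" by auto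
  have "\<pi> j i < length (w j)" using assms(1,3) j unfolding alignments_def by auto
  then show "x \<in> A" using assms(2)[OF j(1)] j(2) nth_mem by blast
qed

lemma mset_perm:
  assumes "bij_betw \<sigma> {..<m} {..<m}"
  shows "mset (map \<sigma> [0..<m]) = mset [0..<m]"
proof -
  have "distinct (map \<sigma> [0..<m])"
    using bij_betw_imp_inj_on[OF assms] by (simp add: distinct_map lessThan_atLeast0)
  moreover have "set (map \<sigma> [0..<m]) = set [0..<m]"
    using bij_betw_imp_surj_on[OF assms] by (simp add: lessThan_atLeast0)
  ultimately show ?thesis by (metis set_eq_iff_mset_eq_distinct distinct_upt)
qed

lemma opt_perm:
  assumes m: "0 < m" and wA: "\<And>j. j < m \<Longrightarrow> set (w j) \<subseteq> A"
    and sym: "\<And>x y. length x = m \<Longrightarrow> set x \<subseteq> A \<Longrightarrow> mset y = mset x \<Longrightarrow> S y = S x"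
    and \<sigma>: "bij_betw \<sigma> {..<m} {..<m}"
  shows "opt_score S m w \<le> opt_score S m (\<lambda>j. w (\<sigma> j))"
proof -
  obtain k \<pi> where a: "(k, \<pi>) \<in> alignments m w" and o: "opt_score S m w = align_score S m w (k, \<pi>)"
    by (rule opt_obtain[OF m])
  have \<sigma>m: "\<sigma> j < m" if "j < m" for j using bij_betwE[OF \<sigma>] that by auto
  have a': "(k, \<lambda>j. \<pi> (\<sigma> j)) \<in> alignments m (\<lambda>j. w (\<sigma> j))"
    using a \<sigma>m unfolding alignments_def by auto
  have col: "S (map (\<lambda>j. w (\<sigma> j) ! \<pi> (\<sigma> j) i) [0..<m]) = S (map (\<lambda>j. w j ! \<pi> j i) [0..<m])"
    if i: "i < k" for i
  proof (rule sym)
    show "set (map (\<lambda>j. w j ! \<pi> j i) [0..<m]) \<subseteq> A" by (rule col_set[OF a wA i])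
    have "map (\<lambda>j. w (\<sigma> j) ! \<pi> (\<sigma> j) i) [0..<m] = map (\<lambda>j. w j ! \<pi> j i) (map \<sigma> [0..<m])"
      by simp
    then show "mset (map (\<lambda>j. w (\<sigma> j) ! \<pi> (\<sigma> j) i) [0..<m]) = mset (map (\<lambda>j. w j ! \<pi> j i) [0..<m])"
      by (metis mset_map mset_perm[OF \<sigma>])
  qed simp
  have "align_score S m (\<lambda>j. w (\<sigma> j)) (k, \<lambda>j. \<pi> (\<sigma> j)) = align_score S m w (k, \<pi>)"
    unfolding align_score_def fst_conv snd_conv using col by (intro sum.cong) auto
  then show ?thesis using o opt_ge[OF m a', where S=S] by simp
qed

lemma opt_rot:
  assumes m: "1 < m" and wA: "\<And>j. j < m \<Longrightarrow> set (w j) \<subseteq> A"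
    and sym: "\<And>x y. length x = m \<Longrightarrow> set x \<subseteq> A \<Longrightarrow> mset y = mset x \<Longrightarrow> S y = S x"
  shows "opt_score S m (\<lambda>j. w ((j + 1) mod m)) = opt_score S m w"
proof (rule antisym)
  have m0: "0 < m" using m by simp
  have b1: "bij_betw (\<lambda>j. (j + 1) mod m) {..<m} {..<m}"
    using rot_bij[of 1 m] m by (simp add: add.commute)
  have b2: "bij_betw (\<lambda>j. (j + (m - 1)) mod m) {..<m} {..<m}"
    using rot_bij[of "m - 1" m] m by (simp add: add.commute)
  show "opt_score S m w \<le> opt_score S m (\<lambda>j. w ((j + 1) mod m))"
    by (rule opt_perm[OF m0 wA sym b1])
  have wA': "set (w ((j + 1) mod m)) \<subseteq> A" if "j < m" for j using wA m0 by simp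
  have "opt_score S m (\<lambda>j. w ((j + 1) mod m)) \<le> opt_score S m (\<lambda>j. w (((j + (m - 1)) mod m + 1) mod m))"
    by (rule opt_perm[OF m0 _ sym b2]) (use wA' in auto)
  also have "\<dots> = opt_score S m w"
  proof (rule opt_cong)
    fix j assume j: "j < m"
    have "((j + (m - 1)) mod m + 1) mod m = (j + (m - 1) + 1) mod m" by (rule mod_add_left_eq)
    also have "\<dots> = j" using j m by simp
    finally show "w (((j + (m - 1)) mod m + 1) mod m) = w j" by simp
  qed
  finally show "opt_score S m (\<lambda>j. w ((j + 1) mod m)) \<le> opt_score S m w" .
qed



lemma map_upt_split: "map f [0..<a+b] = map f [0..<a] @ map (\<lambda>i. f (a+i)) [0..<b]"
  by (induction b) auto


locale probctx =
  fixes M :: "'a measure" and X :: "nat \<Rightarrow> nat \<Rightarrow> 'a \<Rightarrow> real" and A :: "real set" and m :: nat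
  assumes PS: "prob_space M"
    and indep: "prob_space.indep_vars M (\<lambda>_. borel) (\<lambda>(j, i). X j i) ({..<m} \<times> UNIV)"
    and ident: "\<And>j i. j < m \<Longrightarrow> distr M borel (X j i) = distr M borel (X 0 0)"
    and vals: "\<And>j i \<omega>. j < m \<Longrightarrow> \<omega> \<in> space M \<Longrightarrow> X j i \<omega> \<in> A"
    and finA: "finite A"
begin

lemma rvX: "j < m \<Longrightarrow> X j i \<in> borel_measurable M"
  using indep unfolding prob_space.indep_vars_def2[OF PS] by force

lemma indsets: "prob_space.indep_sets M (\<lambda>q. {(\<lambda>(j, i). X j i) q -` B \<inter> space M | B. B \<in> sets borel}) ({..<m} \<times> UNIV)"
  using indep unfolding prob_space.indep_vars_def2[OF PS] by simp

lemma point_prob: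
  assumes "j < m"
  shows "measure M (X j i -` {c} \<inter> space M) = measure (distr M borel (X 0 0)) {c}"
proof -
  have "measure (distr M borel (X 0 0)) {c} = measure (distr M borel (X j i)) {c}"
    using ident[OF assms] by simp
  also have "\<dots> = measure M (X j i -` {c} \<inter> space M)" by (rule measure_distr[OF rvX[OF assms]]) simp
  finally show ?thesis by simp
qed

lemma K:
  fixes \<tau> :: "nat \<times> nat \<Rightarrow> nat \<times> nat" and P :: "(nat \<times> nat) set" and g :: "(nat \<times> nat \<Rightarrow> real) \<Rightarrow> real"
  assumes fP: "finite P" and inj: "inj_on \<tau> P" and \<tau>P: "\<tau> ` P \<subseteq> {..<m} \<times> UNIV"
  shows "integrable M (\<lambda>\<omega>. g (\<lambda>p\<in>P. X (fst (\<tau> p)) (snd (\<tau> p)) \<omega>))"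
    and "integral\<^sup>L M (\<lambda>\<omega>. g (\<lambda>p\<in>P. X (fst (\<tau> p)) (snd (\<tau> p)) \<omega>)) =
          (\<Sum>a\<in>PiE P (\<lambda>_. A). g a * (\<Prod>p\<in>P. measure (distr M borel (X 0 0)) {a p}))"
proof -
  interpret prob_space M by (rule PS)
  define Y where "Y p \<omega> = X (fst (\<tau> p)) (snd (\<tau> p)) \<omega>" for p \<omega>
  have tm: "fst (\<tau> p) < m" if "p \<in> P" for p using \<tau>P that by force
  have rvt: "Y p \<in> borel_measurable M" if "p \<in> P" for p
    unfolding Y_def using rvX[OF tm[OF that]] by simp
  define E where "E a = {\<omega> \<in> space M. \<forall>p\<in>P. Y p \<omega> = a p}" for a
  have Eev: "E a \<in> events" for a unfolding E_def
  proof (intro sets.sets_Collect_finite_All fP)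
    fix p assume p: "p \<in> P"
    have "{\<omega> \<in> space M. Y p \<omega> = a p} = Y p -` {a p} \<inter> space M" by auto
    also have "\<dots> \<in> events" by (rule measurable_sets[OF rvt[OF p]]) simp
    finally show "{\<omega> \<in> space M. Y p \<omega> = a p} \<in> events" .
  qed
  have fPi: "finite (PiE P (\<lambda>_. A))" using fP finA by (rule finite_PiE)
  have pt: "g (\<lambda>p\<in>P. Y p \<omega>) = (\<Sum>a\<in>PiE P (\<lambda>_. A). g a * indicator (E a) \<omega>)" if \<omega>: "\<omega> \<in> space M" for \<omega>
  proof -
    define a0 where "a0 = (\<lambda>p\<in>P. Y p \<omega>)"
    have a0A: "a0 \<in> PiE P (\<lambda>_. A)" unfolding a0_def Y_def using vals[OF tm \<omega>] by auto
    have "g a * indicator (E a) \<omega> = (if a = a0 then g a else 0)" if a: "a \<in> PiE P (\<lambda>_. A)" for a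
    proof -
      have "\<omega> \<in> E a \<longleftrightarrow> a = a0"
        using a \<omega> unfolding E_def a0_def by (auto simp: PiE_iff extensional_def fun_eq_iff)
      then show ?thesis by (auto simp: indicator_def)
    qed
    then have "(\<Sum>a\<in>PiE P (\<lambda>_. A). g a * indicator (E a) \<omega>) = (\<Sum>a\<in>PiE P (\<lambda>_. A). if a = a0 then g a else 0)"
      by (intro sum.cong) auto
    also have "\<dots> = g a0" using a0A fPi by (simp add: sum.delta)
    finally show ?thesis unfolding a0_def by simp
  qed
  have ind: "integrable M (indicator (E a) :: 'a \<Rightarrow> real)" for a
    using Eev[of a] by (intro integrable_real_indicator) (auto simp: less_top[symmetric])
  have int1: "integrable M (\<lambda>\<omega>. \<Sum>a\<in>PiE P (\<lambda>_. A). g a * indicator (E a) \<omega>)"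
    by (rule Bochner_Integration.integrable_sum) (simp add: ind)
  have eqf: "integrable M (\<lambda>\<omega>. g (\<lambda>p\<in>P. Y p \<omega>)) = integrable M (\<lambda>\<omega>. \<Sum>a\<in>PiE P (\<lambda>_. A). g a * indicator (E a) \<omega>)"
    by (rule Bochner_Integration.integrable_cong) (auto simp: pt)
  show "integrable M (\<lambda>\<omega>. g (\<lambda>p\<in>P. X (fst (\<tau> p)) (snd (\<tau> p)) \<omega>))"
    using int1 eqf unfolding Y_def by simp
  have probE: "measure M (E a) = (\<Prod>p\<in>P. measure (distr M borel (X 0 0)) {a p})"
    if a: "a \<in> PiE P (\<lambda>_. A)" for a
  proof (cases "P = {}")
    case True
    then have "E a = space M" unfolding E_def by simp
    then show ?thesis using True by (simp add: prob_space)
  next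
    case False
    define F where "F q = X (fst q) (snd q) -` {a (the_inv_into P \<tau> q)} \<inter> space M" for q
    have EF: "E a = (\<Inter>q\<in>\<tau>`P. F q)"
      using False unfolding E_def F_def Y_def by (auto simp: the_inv_into_f_f[OF inj])
    have "measure M (\<Inter>q\<in>\<tau>`P. F q) = (\<Prod>q\<in>\<tau>`P. measure M (F q))"
    proof (rule indep_setsD[OF indsets \<tau>P])
      show "\<tau> ` P \<noteq> {}" "finite (\<tau> ` P)" using False fP by auto
      show "\<forall>q\<in>\<tau> ` P. F q \<in> {(\<lambda>(j, i). X j i) q -` B \<inter> space M | B. B \<in> sets borel}"
        unfolding F_def by (auto simp: case_prod_beta)
    qed
    also have "\<dots> = (\<Prod>p\<in>P. measure M (F (\<tau> p)))" by (rule prod.reindex[OF inj, unfolded comp_def])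
    also have "\<dots> = (\<Prod>p\<in>P. measure (distr M borel (X 0 0)) {a p})"
    proof (rule prod.cong[OF refl])
      fix p assume p: "p \<in> P"
      have "F (\<tau> p) = X (fst (\<tau> p)) (snd (\<tau> p)) -` {a p} \<inter> space M"
        unfolding F_def by (simp add: the_inv_into_f_f[OF inj p])
      then show "measure M (F (\<tau> p)) = measure (distr M borel (X 0 0)) {a p}"
        using point_prob[OF tm[OF p]] by simp
    qed
    finally show ?thesis using EF by simp
  qed
  have "integral\<^sup>L M (\<lambda>\<omega>. g (\<lambda>p\<in>P. Y p \<omega>)) = integral\<^sup>L M (\<lambda>\<omega>. \<Sum>a\<in>PiE P (\<lambda>_. A). g a * indicator (E a) \<omega>)"
    by (rule Bochner_Integration.integral_cong) (auto simp: pt)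
  also have "\<dots> = (\<Sum>a\<in>PiE P (\<lambda>_. A). g a * measure M (E a))"
    using Eev by (subst Bochner_Integration.integral_sum) (auto intro: ind simp: Int_absorb2 sets.sets_into_space)
  also have "\<dots> = (\<Sum>a\<in>PiE P (\<lambda>_. A). g a * (\<Prod>p\<in>P. measure (distr M borel (X 0 0)) {a p}))"
    by (intro sum.cong) (auto simp: probE)
  finally show "integral\<^sup>L M (\<lambda>\<omega>. g (\<lambda>p\<in>P. X (fst (\<tau> p)) (snd (\<tau> p)) \<omega>)) =
          (\<Sum>a\<in>PiE P (\<lambda>_. A). g a * (\<Prod>p\<in>P. measure (distr M borel (X 0 0)) {a p}))"
    unfolding Y_def by simp
qed


lemma Kw:
  fixes \<tau> :: "nat \<times> nat \<Rightarrow> nat \<times> nat" and ll :: "nat \<Rightarrow> nat" and S :: "real list \<Rightarrow> real"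
  assumes inj: "inj_on \<tau> (SIGMA j:{..<m}. {..<ll j})" and \<tau>P: "\<tau> ` (SIGMA j:{..<m}. {..<ll j}) \<subseteq> {..<m} \<times> UNIV"
  shows "integrable M (\<lambda>\<omega>. opt_score S m (\<lambda>j. map (\<lambda>i. X (fst (\<tau> (j, i))) (snd (\<tau> (j, i))) \<omega>) [0..<ll j]))"
    and "integral\<^sup>L M (\<lambda>\<omega>. opt_score S m (\<lambda>j. map (\<lambda>i. X (fst (\<tau> (j, i))) (snd (\<tau> (j, i))) \<omega>) [0..<ll j])) =
      (\<Sum>a\<in>PiE (SIGMA j:{..<m}. {..<ll j}) (\<lambda>_. A). opt_score S m (\<lambda>j. map (\<lambda>i. a (j, i)) [0..<ll j]) *
          (\<Prod>p\<in>(SIGMA j:{..<m}. {..<ll j}). measure (distr M borel (X 0 0)) {a p}))"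
proof -
  define P where "P = (SIGMA j:{..<m}. {..<ll j})"
  have fP: "finite P" unfolding P_def by auto
  define g where "g a = opt_score S m (\<lambda>j. map (\<lambda>i. a (j, i)) [0..<ll j])" for a :: "nat \<times> nat \<Rightarrow> real"
  have eq: "g (\<lambda>p\<in>P. X (fst (\<tau> p)) (snd (\<tau> p)) \<omega>) =
      opt_score S m (\<lambda>j. map (\<lambda>i. X (fst (\<tau> (j, i))) (snd (\<tau> (j, i))) \<omega>) [0..<ll j])" for \<omega>
    unfolding g_def by (rule opt_cong) (auto simp: P_def)
  note K1 = K(1)[OF fP inj[folded P_def] \<tau>P[folded P_def], of g]
  note K2 = K(2)[OF fP inj[folded P_def] \<tau>P[folded P_def], of g]
  show "integrable M (\<lambda>\<omega>. opt_score S m (\<lambda>j. map (\<lambda>i. X (fst (\<tau> (j, i))) (snd (\<tau> (j, i))) \<omega>) [0..<ll j]))"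
    using K1 unfolding eq .
  show "integral\<^sup>L M (\<lambda>\<omega>. opt_score S m (\<lambda>j. map (\<lambda>i. X (fst (\<tau> (j, i))) (snd (\<tau> (j, i))) \<omega>) [0..<ll j])) =
      (\<Sum>a\<in>PiE (SIGMA j:{..<m}. {..<ll j}) (\<lambda>_. A). opt_score S m (\<lambda>j. map (\<lambda>i. a (j, i)) [0..<ll j]) *
          (\<Prod>p\<in>(SIGMA j:{..<m}. {..<ll j}). measure (distr M borel (X 0 0)) {a p}))"
    using K2 unfolding eq unfolding g_def P_def .
qed

end



context probctx
begin


lemma F_id:
  shows "integrable M (\<lambda>\<omega>. opt_score S m (\<lambda>j. map (\<lambda>i. X j i \<omega>) [0..<ll j]))"
    and "integral\<^sup>L M (\<lambda>\<omega>. opt_score S m (\<lambda>j. map (\<lambda>i. X j i \<omega>) [0..<ll j])) =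
      (\<Sum>a\<in>PiE (SIGMA j:{..<m}. {..<ll j}) (\<lambda>_. A). opt_score S m (\<lambda>j. map (\<lambda>i. a (j, i)) [0..<ll j]) *
          (\<Prod>p\<in>(SIGMA j:{..<m}. {..<ll j}). measure (distr M borel (X 0 0)) {a p}))"
proof -
  have i1: "inj_on (id::nat\<times>nat\<Rightarrow>nat\<times>nat) (SIGMA j:{..<m}. {..<ll j})" by simp
  have i2: "id ` (SIGMA j:{..<m}. {..<ll j}) \<subseteq> {..<m} \<times> UNIV" by auto
  show "integrable M (\<lambda>\<omega>. opt_score S m (\<lambda>j. map (\<lambda>i. X j i \<omega>) [0..<ll j]))"
    using Kw(1)[OF i1 i2, of S] by (simp only: id_apply fst_conv snd_conv)
  show "integral\<^sup>L M (\<lambda>\<omega>. opt_score S m (\<lambda>j. map (\<lambda>i. X j i \<omega>) [0..<ll j])) =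
      (\<Sum>a\<in>PiE (SIGMA j:{..<m}. {..<ll j}) (\<lambda>_. A). opt_score S m (\<lambda>j. map (\<lambda>i. a (j, i)) [0..<ll j]) *
          (\<Prod>p\<in>(SIGMA j:{..<m}. {..<ll j}). measure (distr M borel (X 0 0)) {a p}))"
    using Kw(2)[OF i1 i2, of S] by (simp only: id_apply fst_conv snd_conv)
qed

lemma F_shift:
  shows "integrable M (\<lambda>\<omega>. opt_score S m (\<lambda>j. map (\<lambda>i. X j (s j + i) \<omega>) [0..<ll j]))"
    and "integral\<^sup>L M (\<lambda>\<omega>. opt_score S m (\<lambda>j. map (\<lambda>i. X j (s j + i) \<omega>) [0..<ll j]))
       = integral\<^sup>L M (\<lambda>\<omega>. opt_score S m (\<lambda>j. map (\<lambda>i. X j i \<omega>) [0..<ll j]))"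
proof -
  have inj: "inj_on (\<lambda>(j, i). (j, s j + i)) (SIGMA j:{..<m}. {..<ll j})" by (auto simp: inj_on_def)
  have im: "(\<lambda>(j, i). (j, s j + i)) ` (SIGMA j:{..<m}. {..<ll j}) \<subseteq> {..<m} \<times> UNIV" by auto
  show "integrable M (\<lambda>\<omega>. opt_score S m (\<lambda>j. map (\<lambda>i. X j (s j + i) \<omega>) [0..<ll j]))"
    using Kw(1)[OF inj im, of S] by simp
  show "integral\<^sup>L M (\<lambda>\<omega>. opt_score S m (\<lambda>j. map (\<lambda>i. X j (s j + i) \<omega>) [0..<ll j]))
       = integral\<^sup>L M (\<lambda>\<omega>. opt_score S m (\<lambda>j. map (\<lambda>i. X j i \<omega>) [0..<ll j]))"
    using Kw(2)[OF inj im, of S] F_id(2)[of S ll] by simp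
qed

lemma F_rotK:
  assumes m1: "1 < m"
  shows "integral\<^sup>L M (\<lambda>\<omega>. opt_score S m (\<lambda>j. map (\<lambda>i. X ((j + 1) mod m) i \<omega>) [0..<ll j]))
       = integral\<^sup>L M (\<lambda>\<omega>. opt_score S m (\<lambda>j. map (\<lambda>i. X j i \<omega>) [0..<ll j]))"
proof -
  have e: "(\<lambda>j. (j + 1) mod m) = (\<lambda>k. (1 + k) mod m)" by (simp add: add.commute)
  have ij: "inj_on (\<lambda>j. (j + 1) mod m) {..<m}"
    using bij_betw_imp_inj_on[OF rot_bij[OF m1]] by (simp add: add.commute)
  have inj: "inj_on (\<lambda>(j, i). ((j + 1) mod m, i)) (SIGMA j:{..<m}. {..<ll j})"
    by (rule inj_onI) (use inj_onD[OF ij] in auto)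
  have im: "(\<lambda>(j, i). ((j + 1) mod m, i)) ` (SIGMA j:{..<m}. {..<ll j}) \<subseteq> {..<m} \<times> UNIV" using m1 by auto
  show ?thesis
    using Kw(2)[OF inj im, of S] F_id(2)[of S ll] by simp
qed

lemma gam_inst:
  assumes m1: "1 < m" and B0: "0 \<le> B"
    and SB: "\<And>x. length x = m \<Longrightarrow> set x \<subseteq> A \<Longrightarrow> S x \<le> B"
    and sym: "\<And>x y. length x = m \<Longrightarrow> set x \<subseteq> A \<Longrightarrow> mset y = mset x \<Longrightarrow> S y = S x"
  shows "gam m (\<lambda>ll. integral\<^sup>L M (\<lambda>\<omega>. opt_score S m (\<lambda>j. map (\<lambda>i. X j i \<omega>) [0..<ll j]))) B"
proof -
  interpret prob_space M by (rule PS)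
  have m0: "0 < m" using m1 by simp
  have wA: "set (map (\<lambda>i. X j i \<omega>) [0..<ll j]) \<subseteq> A" if "\<omega> \<in> space M" "j < m" for ll \<omega> j
    using vals[OF that(2) that(1)] by auto
  show ?thesis
  proof (unfold_locales)
    show "0 < m" by (rule m0)
    show "0 \<le> B" by (rule B0)
  next
    fix l l' :: "nat \<Rightarrow> nat" assume H: "\<And>j. j < m \<Longrightarrow> l j = l' j"
    show "integral\<^sup>L M (\<lambda>\<omega>. opt_score S m (\<lambda>j. map (\<lambda>i. X j i \<omega>) [0..<l j])) =
          integral\<^sup>L M (\<lambda>\<omega>. opt_score S m (\<lambda>j. map (\<lambda>i. X j i \<omega>) [0..<l' j]))"
      by (rule Bochner_Integration.integral_cong[OF refl], rule opt_cong) (simp add: H)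
  next
    fix l l' :: "nat \<Rightarrow> nat"
    have pw: "opt_score S m (\<lambda>j. map (\<lambda>i. X j i \<omega>) [0..<l j]) + opt_score S m (\<lambda>j. map (\<lambda>i. X j (l j + i) \<omega>) [0..<l' j])
        \<le> opt_score S m (\<lambda>j. map (\<lambda>i. X j i \<omega>) [0..<l j + l' j])" for \<omega>
      using opt_concat[OF m0, of S "\<lambda>j. map (\<lambda>i. X j i \<omega>) [0..<l j]" "\<lambda>j. map (\<lambda>i. X j (l j + i) \<omega>) [0..<l' j]"]
      by (simp add: map_upt_split)
    have "integral\<^sup>L M (\<lambda>\<omega>. opt_score S m (\<lambda>j. map (\<lambda>i. X j i \<omega>) [0..<l j])) +
          integral\<^sup>L M (\<lambda>\<omega>. opt_score S m (\<lambda>j. map (\<lambda>i. X j i \<omega>) [0..<l' j]))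
        = integral\<^sup>L M (\<lambda>\<omega>. opt_score S m (\<lambda>j. map (\<lambda>i. X j i \<omega>) [0..<l j]) + opt_score S m (\<lambda>j. map (\<lambda>i. X j (l j + i) \<omega>) [0..<l' j]))"
      using Bochner_Integration.integral_add[OF F_id(1)[where S=S and ll=l] F_shift(1)[where S=S and s=l and ll=l']]
        F_shift(2)[where S=S and s=l and ll=l'] by simp
    also have "\<dots> \<le> integral\<^sup>L M (\<lambda>\<omega>. opt_score S m (\<lambda>j. map (\<lambda>i. X j i \<omega>) [0..<l j + l' j]))"
      by (rule Bochner_Integration.integral_mono[OF Bochner_Integration.integrable_add[OF F_id(1)[where S=S and ll=l] F_shift(1)[where S=S and s=l and ll=l']] F_id(1)]) (rule pw)
    finally show "integral\<^sup>L M (\<lambda>\<omega>. opt_score S m (\<lambda>j. map (\<lambda>i. X j i \<omega>) [0..<l j])) +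
          integral\<^sup>L M (\<lambda>\<omega>. opt_score S m (\<lambda>j. map (\<lambda>i. X j i \<omega>) [0..<l' j]))
        \<le> integral\<^sup>L M (\<lambda>\<omega>. opt_score S m (\<lambda>j. map (\<lambda>i. X j i \<omega>) [0..<l j + l' j]))" .
  next
    fix l l' :: "nat \<Rightarrow> nat" and d :: nat assume H: "\<And>j. j < m \<Longrightarrow> l' j \<le> l j + d"
    define lm where "lm j = max (l j) (l' j)" for j
    have pw: "opt_score S m (\<lambda>j. map (\<lambda>i. X j i \<omega>) [0..<l' j])
        \<le> opt_score S m (\<lambda>j. map (\<lambda>i. X j i \<omega>) [0..<l j]) + real d * B" if \<omega>: "\<omega> \<in> space M" for \<omega>
    proof -
      have "opt_score S m (\<lambda>j. map (\<lambda>i. X j i \<omega>) [0..<l' j]) \<le> opt_score S m (\<lambda>j. map (\<lambda>i. X j i \<omega>) [0..<lm j])"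
      proof (rule opt_mono_prefix[OF m0])
        fix j assume "j < m"
        have "map (\<lambda>i. X j i \<omega>) [0..<lm j] = map (\<lambda>i. X j i \<omega>) [0..<l' j + (lm j - l' j)]" unfolding lm_def by simp
        then show "map (\<lambda>i. X j i \<omega>) [0..<lm j] = map (\<lambda>i. X j i \<omega>) [0..<l' j] @ map (\<lambda>i. X j (l' j + i) \<omega>) [0..<lm j - l' j]"
          by (simp only: map_upt_split)
      qed
      also have "\<dots> \<le> opt_score S m (\<lambda>j. map (\<lambda>i. X j i \<omega>) [0..<l j]) + real d * B"
      proof (rule opt_drop[OF m0 B0 SB])
        fix j assume j: "j < m"
        show "set (map (\<lambda>i. X j i \<omega>) [0..<lm j]) \<subseteq> A" by (rule wA[OF \<omega> j])
        have "map (\<lambda>i. X j i \<omega>) [0..<lm j] = map (\<lambda>i. X j i \<omega>) [0..<l j + (lm j - l j)]" unfolding lm_def by simp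
        then show "map (\<lambda>i. X j i \<omega>) [0..<lm j] = map (\<lambda>i. X j i \<omega>) [0..<l j] @ map (\<lambda>i. X j (l j + i) \<omega>) [0..<lm j - l j]"
          by (simp only: map_upt_split)
        show "length (map (\<lambda>i. X j (l j + i) \<omega>) [0..<lm j - l j]) \<le> d"
          using H[OF j] unfolding lm_def by simp
      qed
      finally show ?thesis .
    qed
    have "integral\<^sup>L M (\<lambda>\<omega>. opt_score S m (\<lambda>j. map (\<lambda>i. X j i \<omega>) [0..<l' j]))
        \<le> integral\<^sup>L M (\<lambda>\<omega>. opt_score S m (\<lambda>j. map (\<lambda>i. X j i \<omega>) [0..<l j]) + real d * B)"
      by (rule Bochner_Integration.integral_mono[OF F_id(1) Bochner_Integration.integrable_add[OF F_id(1) integrable_const]]) (rule pw)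
    also have "\<dots> = integral\<^sup>L M (\<lambda>\<omega>. opt_score S m (\<lambda>j. map (\<lambda>i. X j i \<omega>) [0..<l j])) + real d * B"
      using Bochner_Integration.integral_add[OF F_id(1)[where S=S and ll=l] integrable_const[of "real d * B"]]
      by (simp add: prob_space)
    finally show "integral\<^sup>L M (\<lambda>\<omega>. opt_score S m (\<lambda>j. map (\<lambda>i. X j i \<omega>) [0..<l' j]))
        \<le> integral\<^sup>L M (\<lambda>\<omega>. opt_score S m (\<lambda>j. map (\<lambda>i. X j i \<omega>) [0..<l j])) + real d * B" .
  next
    fix l :: "nat \<Rightarrow> nat"
    show "0 \<le> integral\<^sup>L M (\<lambda>\<omega>. opt_score S m (\<lambda>j. map (\<lambda>i. X j i \<omega>) [0..<l j]))"
      by (rule Bochner_Integration.integral_nonneg) (rule opt_nonneg[OF m0])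
  next
    fix l :: "nat \<Rightarrow> nat"
    have "integral\<^sup>L M (\<lambda>\<omega>. opt_score S m (\<lambda>j. map (\<lambda>i. X j i \<omega>) [0..<l j])) \<le> integral\<^sup>L M (\<lambda>\<omega>. B * real (l 0))"
    proof (rule Bochner_Integration.integral_mono)
      show "integrable M (\<lambda>\<omega>. opt_score S m (\<lambda>j. map (\<lambda>i. X j i \<omega>) [0..<l j]))" by (rule F_id)
      show "integrable M (\<lambda>\<omega>. B * real (l 0))" by simp
      fix \<omega> assume \<omega>: "\<omega> \<in> space M"
      show "opt_score S m (\<lambda>j. map (\<lambda>i. X j i \<omega>) [0..<l j]) \<le> B * real (l 0)"
        using opt_upper[OF m0 B0 SB, where w="\<lambda>j. map (\<lambda>i. X j i \<omega>) [0..<l j]"] wA[OF \<omega>] by simp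
    qed
    then show "integral\<^sup>L M (\<lambda>\<omega>. opt_score S m (\<lambda>j. map (\<lambda>i. X j i \<omega>) [0..<l j])) \<le> B * real (l 0)"
      by (simp add: prob_space)
  next
    fix l :: "nat \<Rightarrow> nat"
    have "integral\<^sup>L M (\<lambda>\<omega>. opt_score S m (\<lambda>j. map (\<lambda>i. X j i \<omega>) [0..<l ((j + 1) mod m)]))
        = integral\<^sup>L M (\<lambda>\<omega>. opt_score S m (\<lambda>j. map (\<lambda>i. X ((j + 1) mod m) i \<omega>) [0..<l ((j + 1) mod m)]))"
      by (rule F_rotK[OF m1, symmetric])
    also have "\<dots> = integral\<^sup>L M (\<lambda>\<omega>. opt_score S m (\<lambda>j. map (\<lambda>i. X j i \<omega>) [0..<l j]))"
    proof (rule Bochner_Integration.integral_cong[OF refl])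
      fix \<omega> assume \<omega>: "\<omega> \<in> space M"
      show "opt_score S m (\<lambda>j. map (\<lambda>i. X ((j + 1) mod m) i \<omega>) [0..<l ((j + 1) mod m)]) =
            opt_score S m (\<lambda>j. map (\<lambda>i. X j i \<omega>) [0..<l j])"
      proof -
        have "opt_score S m (\<lambda>j. (\<lambda>j. map (\<lambda>i. X j i \<omega>) [0..<l j]) ((j + 1) mod m)) =
            opt_score S m (\<lambda>j. map (\<lambda>i. X j i \<omega>) [0..<l j])"
          by (rule opt_rot[where A=A, OF m1]) (auto intro: vals[OF _ \<omega>] sym)
        then show ?thesis by simp
      qed
    qed
    finally show "integral\<^sup>L M (\<lambda>\<omega>. opt_score S m (\<lambda>j. map (\<lambda>i. X j i \<omega>) [0..<l ((j + 1) mod m)]))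
        = integral\<^sup>L M (\<lambda>\<omega>. opt_score S m (\<lambda>j. map (\<lambda>i. X j i \<omega>) [0..<l j]))" .
  qed
qed

end

theorem proposition3p1:
  fixes M :: "'a measure" and X :: "nat \<Rightarrow> nat \<Rightarrow> 'a \<Rightarrow> real"
    and A :: "real set" and S :: "real list \<Rightarrow> real" and m :: nat and D :: real
  assumes "m \<ge> 2"
    and "finite A"
    and "prob_space M"
    and indep: "prob_space.indep_vars M (\<lambda>_. borel) (\<lambda>(j, i). X j i) ({..<m} \<times> UNIV)"
    and ident: "\<And>j i. j < m \<Longrightarrow> distr M borel (X j i) = distr M borel (X 0 0)"
    and vals: "\<And>j i \<omega>. j < m \<Longrightarrow> \<omega> \<in> space M \<Longrightarrow> X j i \<omega> \<in> A"
    and S_nonneg: "\<And>x. length x = m \<Longrightarrow> set x \<subseteq> A \<Longrightarrow> S x \<ge> 0"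
    and S_nonzero: "\<exists>x. length x = m \<and> set x \<subseteq> A \<and> S x \<noteq> 0"
    and S_sym: "\<And>x y. length x = m \<Longrightarrow> set x \<subseteq> A \<Longrightarrow> mset y = mset x \<Longrightarrow> S y = S x"
    and S_bdd: "bdd_above (S ` {x. length x = m \<and> set x \<subseteq> A})"
    and "D > 0"
    and S_lip: "\<And>x y. length x = m \<Longrightarrow> length y = m \<Longrightarrow> set x \<subseteq> A \<Longrightarrow> set y \<subseteq> A
                 \<Longrightarrow> card {j. j < m \<and> x ! j \<noteq> y ! j} \<le> 1 \<Longrightarrow> \<bar>S x - S y\<bar> \<le> D"
  shows "(\<forall>q\<in>Qdom m. \<forall>r\<in>Qdom m. \<forall>t\<in>{0..1}.
            t * gamma_tilde M X S m q + (1 - t) * gamma_tilde M X S m r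
              \<le> gamma_tilde M X S m (\<lambda>j. t * q j + (1 - t) * r j))
       \<and> (\<forall>q\<in>Qdom m. gamma_tilde M X S m q \<le> gamma_tilde M X S m (\<lambda>_. 1))"
  proof -
  have pc: "probctx M X A m"
    by (rule probctx.intro[OF assms(3) indep ident vals assms(2)])
  obtain B0 where B0: "\<And>x. x \<in> {x. length x = m \<and> set x \<subseteq> A} \<Longrightarrow> S x \<le> B0"
    using S_bdd unfolding bdd_above_def by blast
  define B where "B = max B0 0"
  have Bnn: "0 \<le> B" unfolding B_def by simp
  have SB: "S x \<le> B" if "length x = m" "set x \<subseteq> A" for x
  proof -
    have "S x \<le> B0" using B0 that by simp
    then show ?thesis unfolding B_def by simp
  qed
  have m1: "1 < m" using assms(1) by simp
  interpret g: gam m "\<lambda>ll. integral\<^sup>L M (\<lambda>\<omega>. opt_score S m (\<lambda>j. map (\<lambda>i. X j i \<omega>) [0..<ll j]))" B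
    by (rule probctx.gam_inst[OF pc m1 Bnn SB S_sym])
  have GT: "gamma_tilde M X S m q = g.Gam q" for q
    unfolding gamma_tilde_def g.Gam_def g.a_def by (rule refl)
  have nnQ: "g.nn q" if "q \<in> Qdom m" for q
    using that unfolding Qdom_def g.nn_def by (simp add: less_imp_le)
  show ?thesis
    unfolding GT
  proof (intro conjI ballI)
    fix q r and t :: real assume q: "q \<in> Qdom m" and r: "r \<in> Qdom m" and t: "t \<in> {0..1}"
    from t have t0: "0 \<le> t" and t1: "t \<le> 1" by simp_all
    show "t * g.Gam q + (1 - t) * g.Gam r \<le> g.Gam (\<lambda>j. t * q j + (1 - t) * r j)"
      by (rule g.concave[OF nnQ[OF q] nnQ[OF r] t0 t1])
  next
    fix q assume q: "q \<in> Qdom m"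
    have sq: "(\<Sum>j<m. q j) = real m" using q unfolding Qdom_def by simp
    show "g.Gam q \<le> g.Gam (\<lambda>_. 1)"
      by (rule g.maxim[OF nnQ[OF q] sq])
  qed
qed


end
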